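(* Let $S$ be a random subset of a finite set $V$ and let $u\in V$. Suppose that the events $\{u'\in S\}$ for $u'\ne u$ are jointly independent of the event $\{u\in S\}$. Let $s$ be an element of $S$ chosen uniformly at random (if $S=\varnothing$, $s$ is undefined). Then $\Pr[u=s]\ge\Pr[u\in S]/(\mathbb{E}[|S|]+1)$. *)

theory Defs
  imports "HOL-Probability.Probability"
begin

definition uniform_element :: "'a set pmf \<Rightarrow> 'a option pmf" where
  "uniform_element P =
     bind_pmf P (\<lambda>A. if A = {} then return_pmf None else map_pmf Some (pmf_of_set A))"

end

theory Submission
  imports Defs
begin

lemma delta_sum:
  fixes c :: "'b \<Rightarrow> real" and h :: "'c \<Rightarrow> real"
  assumes "finite Om" "finite TT" "\<And>A. A \<in> Om \<Longrightarrow> X A \<in> TT"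
  shows "(\<Sum>A\<in>Om. c A * h (X A)) = (\<Sum>T\<in>TT. h T * (\<Sum>A\<in>Om. c A * (if X A = T then 1 else 0)))"
proof -
  have "(\<Sum>T\<in>TT. h T * (\<Sum>A\<in>Om. c A * (if X A = T then 1 else 0)))
      = (\<Sum>A\<in>Om. \<Sum>T\<in>TT. (if X A = T then c A * h T else 0))"
    by (subst sum.swap) (auto simp: sum_distrib_left intro!: sum.cong)
  also have "\<dots> = (\<Sum>A\<in>Om. c A * h (X A))"
    using assms(2,3) by (intro sum.cong) (auto simp: sum.delta)
  finally show ?thesis by simp
qed

lemma tangent:
  fixes y m :: real
  assumes "y \<ge> 0" "m \<ge> 0"
  shows "1/(y+1) \<ge> 1/(m+1) - (y - m)/(m+1)^2"
proof -
  have a: "y + 1 > 0" "(m + 1)^2 > 0" "m + 1 > 0" using assms by auto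
  have e: "1/(m+1) - (y - m)/(m+1)^2 = (2*m+1-y)/(m+1)^2"
  proof -
    have "1/(m+1) = (m+1)/(m+1)^2" using a by (simp add: power2_eq_square)
    then have "1/(m+1) - (y - m)/(m+1)^2 = ((m+1) - (y-m))/(m+1)^2" by (metis diff_divide_distrib)
    moreover have "(m+1) - (y-m) = 2*m+1-y" by simp
    ultimately show ?thesis by metis
  qed
  have "(2*m+1-y)*(y+1) \<le> 1 * (m+1)^2"
    using sum_squares_ge_zero[of 0 "y-m"] by (simp add: power2_eq_square algebra_simps)
  then have "(2*m+1-y)/(m+1)^2 \<le> 1/(y+1)" using a by (simp add: divide_simps)
  then show ?thesis using e by simp
qed

theorem mainTheorem9:
  fixes P :: "'a set pmf" and V :: "'a set" and u :: 'a
  assumes "finite V"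
    and "u \<in> V"
    and "\<And>A. A \<in> set_pmf P \<Longrightarrow> A \<subseteq> V"
    and "prob_space.indep_set (measure_pmf P)
           (sigma_sets (space (measure_pmf P)) {{A. u' \<in> A} | u'. u' \<noteq> u})
           {{A. u \<in> A}}"
  shows "measure_pmf.prob (uniform_element P) {Some u}
         \<ge> measure_pmf.prob P {A. u \<in> A}
             / (measure_pmf.expectation P (\<lambda>A. real (card A)) + 1)"
proof -
  define Om where "Om = Pow V"
  define W where "W = V - {u}"
  define pm where "pm = pmf P"
  define p where "p = measure_pmf.prob P {A. u \<in> A}"
  define h where "h = (\<lambda>T::'a set. 1 / (real (card T) + 1))"
  have finOm: "finite Om" using assms(1) by (simp add: Om_def)
  have finW: "finite (Pow W)" using assms(1) by (simp add: W_def)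
  have supp: "\<And>A. A \<in> set_pmf P \<Longrightarrow> A \<in> Om" using assms(3) by (auto simp: Om_def)
  have intE: "\<And>f. measure_pmf.expectation P f = (\<Sum>A\<in>Om. f A * pm A)"
    unfolding pm_def by (rule integral_measure_pmf_real[OF finOm]) (use supp in auto)
  have probE: "\<And>E. measure_pmf.prob P E = (\<Sum>A\<in>Om. indicator E A * pm A)"
  proof -
    fix E
    have "measure_pmf.prob P E = measure_pmf.expectation P (indicator E)"
      by (simp add: measure_pmf.emeasure_eq_measure)
    also have "\<dots> = (\<Sum>A\<in>Om. indicator E A * pm A)" by (rule intE)
    finally show "measure_pmf.prob P E = (\<Sum>A\<in>Om. indicator E A * pm A)" .
  qed
  have pm1: "(\<Sum>A\<in>Om. pm A) = 1"
    unfolding pm_def by (rule sum_pmf_eq_1[OF finOm]) (use supp in auto)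
  have pm0: "\<And>A. pm A \<ge> 0" by (simp add: pm_def)
  have indep: "\<And>T. T \<subseteq> W \<Longrightarrow> measure_pmf.prob P ({A. A \<inter> W = T} \<inter> {A. u \<in> A})
        = measure_pmf.prob P {A. A \<inter> W = T} * p"
  proof -
    fix T assume T: "T \<subseteq> W"
    define G where "G = {{A. u' \<in> A} | u'. u' \<noteq> u}"
    have sa: "sigma_algebra UNIV (sigma_sets UNIV G)"
      by (rule sigma_algebra_sigma_sets) auto
    have mem: "{A. A \<inter> W = T} \<in> sigma_sets UNIV G"
    proof (cases "W = {}")
      case True
      then have "{A. A \<inter> W = T} = UNIV" using T by auto
      moreover have "UNIV - {} \<in> sigma_sets UNIV G" by (intro sigma_sets.Compl sigma_sets.Empty)
      ultimately show ?thesis by simp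
    next
      case False
      have eq: "{A. A \<inter> W = T} = {A\<in>UNIV. \<forall>v\<in>W. (v \<in> A \<longleftrightarrow> v \<in> T)}" using T by auto
      have each: "\<And>v. v \<in> W \<Longrightarrow> {A\<in>UNIV. (v \<in> A \<longleftrightarrow> v \<in> T)} \<in> sigma_sets UNIV G"
      proof -
        fix v assume v: "v \<in> W"
        have b: "{A\<in>UNIV. v \<in> A} \<in> sigma_sets UNIV G"
          using v by (intro sigma_sets.Basic) (auto simp: G_def W_def)
        show "{A\<in>UNIV. (v \<in> A \<longleftrightarrow> v \<in> T)} \<in> sigma_sets UNIV G"
        proof (cases "v \<in> T")
          case True then show ?thesis using b by simp
        next
          case False
          have "UNIV - {A. v \<in> A} \<in> sigma_sets UNIV G"
            by (rule sigma_sets.Compl) (use b in simp)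
          moreover have "UNIV - {A. v \<in> A} = {A\<in>UNIV. \<not> v \<in> A}" by auto
          ultimately have "{A\<in>UNIV. \<not> v \<in> A} \<in> sigma_sets UNIV G" by simp
          then show ?thesis using False by simp
        qed
      qed
      show ?thesis unfolding eq
        using sigma_algebra.axioms(1)[OF sa] finW False each
        by (intro semiring_of_sets.sets_Collect_finite_All'[where \<Omega>=UNIV])
           (auto simp: algebra_def ring_of_sets_def assms(1) W_def)
    qed
    show "measure_pmf.prob P ({A. A \<inter> W = T} \<inter> {A. u \<in> A})
        = measure_pmf.prob P {A. A \<inter> W = T} * p"
      unfolding p_def
      by (rule prob_space.indep_setD[OF measure_pmf.prob_space_axioms assms(4)])
         (use mem in \<open>auto simp: G_def\<close>)
  qed
  have lhs: "measure_pmf.prob (uniform_element P) {Some u}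
      = (\<Sum>A\<in>Om. pm A * (if u \<in> A then 1 else 0) * h (A \<inter> W))"
  proof -
    have "measure_pmf.prob (uniform_element P) {Some u}
        = measure_pmf.expectation P (\<lambda>A. pmf (if A = {} then return_pmf None else map_pmf Some (pmf_of_set A)) (Some u))"
      by (simp add: measure_pmf_single uniform_element_def pmf_bind)
    also have "\<dots> = (\<Sum>A\<in>Om. pmf (if A = {} then return_pmf None else map_pmf Some (pmf_of_set A)) (Some u) * pm A)"
      by (rule intE)
    also have "\<dots> = (\<Sum>A\<in>Om. pm A * (if u \<in> A then 1 else 0) * h (A \<inter> W))"
    proof (rule sum.cong)
      fix A assume A: "A \<in> Om"
      then have fA: "finite A" "A \<subseteq> V" using assms(1) finite_subset by (auto simp: Om_def)
      show "pmf (if A = {} then return_pmf None else map_pmf Some (pmf_of_set A)) (Some u) * pm A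
          = pm A * (if u \<in> A then 1 else 0) * h (A \<inter> W)"
      proof (cases "u \<in> A")
        case True
        then have ne: "A \<noteq> {}" by auto
        have "A = insert u (A \<inter> W)" using True fA by (auto simp: W_def)
        then have "card A = Suc (card (A \<inter> W))"
          using fA by (metis Int_iff W_def card_insert_disjoint finite_Int insert_Diff1 insertI1 Diff_iff)
        then show ?thesis using True ne fA
          by (simp add: pmf_map_inj' h_def)
      next
        case False
        then show ?thesis
          by (cases "A = {}") (simp_all add: pmf_map_inj' fA)
      qed
    qed simp
    finally show ?thesis .
  qed
  have step1: "(\<Sum>A\<in>Om. pm A * (if u \<in> A then 1 else 0) * h (A \<inter> W))
      = (\<Sum>T\<in>Pow W. h T * measure_pmf.prob P ({A. A \<inter> W = T} \<inter> {A. u \<in> A}))"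
  proof -
    have "(\<Sum>A\<in>Om. pm A * (if u \<in> A then 1 else 0) * h (A \<inter> W))
      = (\<Sum>T\<in>Pow W. h T * (\<Sum>A\<in>Om. pm A * (if u \<in> A then 1 else 0) * (if A \<inter> W = T then 1 else 0)))"
      by (rule delta_sum[OF finOm finW, of "\<lambda>A. A \<inter> W"]) auto
    also have "\<dots> = (\<Sum>T\<in>Pow W. h T * measure_pmf.prob P ({A. A \<inter> W = T} \<inter> {A. u \<in> A}))"
      unfolding probE by (intro sum.cong refl arg_cong[where f="\<lambda>x. h _ * x"]) (auto simp: indicator_def)
    finally show ?thesis .
  qed
  have step2: "(\<Sum>T\<in>Pow W. h T * measure_pmf.prob P ({A. A \<inter> W = T} \<inter> {A. u \<in> A}))
      = p * (\<Sum>T\<in>Pow W. h T * measure_pmf.prob P {A. A \<inter> W = T})"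
    by (auto simp: indep sum_distrib_left intro!: sum.cong)
  have step3: "(\<Sum>T\<in>Pow W. h T * measure_pmf.prob P {A. A \<inter> W = T})
      = (\<Sum>A\<in>Om. pm A * h (A \<inter> W))"
  proof -
    have "(\<Sum>A\<in>Om. pm A * h (A \<inter> W))
      = (\<Sum>T\<in>Pow W. h T * (\<Sum>A\<in>Om. pm A * (if A \<inter> W = T then 1 else 0)))"
      by (rule delta_sum[OF finOm finW, of "\<lambda>A. A \<inter> W"]) auto
    also have "\<dots> = (\<Sum>T\<in>Pow W. h T * measure_pmf.prob P {A. A \<inter> W = T})"
      unfolding probE by (intro sum.cong refl arg_cong[where f="\<lambda>x. h _ * x"]) (auto simp: indicator_def)
    finally show ?thesis by simp
  qed
  define m where "m = (\<Sum>A\<in>Om. pm A * real (card (A \<inter> W)))"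
  have m0: "m \<ge> 0" unfolding m_def using pm0 by (intro sum_nonneg) simp
  have jensen: "(\<Sum>A\<in>Om. pm A * h (A \<inter> W)) \<ge> 1 / (m + 1)"
  proof -
    have "(\<Sum>A\<in>Om. pm A * h (A \<inter> W)) \<ge>
        (\<Sum>A\<in>Om. pm A * (1/(m+1) - (real (card (A \<inter> W)) - m)/(m+1)^2))"
      unfolding h_def using pm0 m0
      by (intro sum_mono mult_left_mono tangent) auto
    also have "(\<Sum>A\<in>Om. pm A * (1/(m+1) - (real (card (A \<inter> W)) - m)/(m+1)^2))
        = (\<Sum>A\<in>Om. (1/(m+1)) * pm A - (1/(m+1)^2) * (pm A * real (card (A \<inter> W))) + ((1/(m+1)^2) * m) * pm A)"
      by (intro sum.cong refl) (simp add: algebra_simps diff_divide_distrib)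
    also have "\<dots> = (1/(m+1)) * (\<Sum>A\<in>Om. pm A) - (1/(m+1)^2) * (\<Sum>A\<in>Om. pm A * real (card (A \<inter> W))) + ((1/(m+1)^2) * m) * (\<Sum>A\<in>Om. pm A)"
      by (simp only: sum.distrib sum_subtractf sum_distrib_left)
    also have "\<dots> = 1/(m+1)" using pm1 by (simp add: m_def)
    finally show ?thesis .
  qed
  have mle: "m \<le> measure_pmf.expectation P (\<lambda>A. real (card A))"
    unfolding intE m_def
  proof (rule sum_mono)
    fix A assume "A \<in> Om"
    then have "finite A" using assms(1) finite_subset by (auto simp: Om_def)
    then have "card (A \<inter> W) \<le> card A" by (simp add: card_mono)
    then show "pm A * real (card (A \<inter> W)) \<le> real (card A) * pm A"
      using pm0[of A] by (simp add: mult.commute mult_left_mono)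
  qed
  have p0: "p \<ge> 0" by (simp add: p_def)
  have "p / (measure_pmf.expectation P (\<lambda>A. real (card A)) + 1) \<le> p * (1/(m+1))"
    using p0 m0 mle by (simp add: divide_left_mono)
  also have "\<dots> \<le> p * (\<Sum>A\<in>Om. pm A * h (A \<inter> W))"
    using p0 jensen using mult_left_mono[OF jensen p0] by simp
  also have "\<dots> = measure_pmf.prob (uniform_element P) {Some u}"
    using lhs step1 step2 step3 by simp
  finally show ?thesis by (simp add: p_def)
qed

end
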